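(* Let $G=(V,E)$ be a finite undirected graph and let $\rho\in(0,1]$. Then the procedure $\textsc{CliqueAgg}(G,\rho)$ (described in the context) outputs an inclusion-maximal $\rho$-dense aggregator of $G$.
   Context: For a graph with $n'\ge 2$ vertices and $m'$ edges its density is $m'/\binom{n'}{2}$; a graph with one vertex has density $1$. For $v\in V$, $N_G(v)$ is the neighborhood of $v$. A degeneracy ordering of a graph is obtained by repeatedly removing a minimum-degree vertex of the remaining graph (ties broken by vertex id); the order of removal is the ordering. A $\rho$-dense aggregator of $G$ is a collection of nonempty vertex sets $S_1,\dots,S_k\subseteq V$ such that (1) every clique $K$ of $G$ satisfies $K\subseteq S_i$ for some $i$, and (2) every induced subgraph $G[S_i]$ has density at least $\rho$. It is inclusion-maximal if there are no distinct $S_i,S_j$ in it with $S_i\subseteq S_j$. The procedure $\textsc{CliqueAgg}(G,\rho)$ returns $\textsc{Rec}(H=V, C=\emptyset, X=\emptyset)$, where $\textsc{Rec}(H,C,X)$ (with $H,C,X\subseteq V$) does the following. (1) If some $x\in X$ satisfies $H\subseteq N_G(x)$, return $\emptyset$. (2) If $G[C\cup H]$ has density at least $\rho$, return $\{C\cup H\}$. (3) Otherwise set $S:=\emptyset$, $\hat H:=H$, $\hat X:=X$, compute a degeneracy ordering of $G[H]$, and for each $v\in H$ in this order: set $H_v:=N_G(v)\cap\hat H$, $C_v:=C\cup\{v\}$, $X_v:=\hat X\cap N_G(v)$; set $S:=S\cup\textsc{Rec}(H_v,C_v,X_v)$; set $\hat H:=\hat H\setminus\{v\}$ and $\hat X:=\hat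 X\cup\{v\}$; if some $x\in\hat X$ satisfies $\hat H\subseteq N_G(x)$, return $S$; if $G[C\cup\hat H]$ has density at least $\rho$, return $S\cup\{C\cup\hat H\}$. (4) After the loop, return $S$. *)

theory Defs
  imports Complex_Main
begin

definition simple_graph :: "'a set \<Rightarrow> ('a \<Rightarrow> 'a \<Rightarrow> bool) \<Rightarrow> bool" where
  "simple_graph V E \<longleftrightarrow> finite V \<and> (\<forall>u v. E u v \<longrightarrow> E v u) \<and> (\<forall>u. \<not> E u u)
     \<and> (\<forall>u v. E u v \<longrightarrow> u \<in> V \<and> v \<in> V)"

definition nbhd :: "'a set \<Rightarrow> ('a \<Rightarrow> 'a \<Rightarrow> bool) \<Rightarrow> 'a \<Rightarrow> 'a set" where
  "nbhd V E v = {u \<in> V. E v u}"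

definition edges_in :: "('a \<Rightarrow> 'a \<Rightarrow> bool) \<Rightarrow> 'a set \<Rightarrow> 'a set set" where
  "edges_in E S = {{u, v} | u v. u \<in> S \<and> v \<in> S \<and> E u v}"

definition density :: "('a \<Rightarrow> 'a \<Rightarrow> bool) \<Rightarrow> 'a set \<Rightarrow> real" where
  "density E S = (if card S \<ge> 2 then real (card (edges_in E S)) / real (card S choose 2) else 1)"

definition deg_in :: "('a \<Rightarrow> 'a \<Rightarrow> bool) \<Rightarrow> 'a set \<Rightarrow> 'a \<Rightarrow> nat" where
  "deg_in E H v = card {u \<in> H. E v u}"

definition min_deg_vertex :: "('a::linorder \<Rightarrow> 'a \<Rightarrow> bool) \<Rightarrow> 'a set \<Rightarrow> 'a" where
  "min_deg_vertex E H = Min {v \<in> H. deg_in E H v = Min (deg_in E H ` H)}"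

lemma min_deg_vertex_in:
  assumes "finite H" "H \<noteq> {}"
  shows "min_deg_vertex E H \<in> H"
proof -
  have "Min (deg_in E H ` H) \<in> deg_in E H ` H" using assms by simp
  then have ne: "{v \<in> H. deg_in E H v = Min (deg_in E H ` H)} \<noteq> {}" by auto
  have "finite {v \<in> H. deg_in E H v = Min (deg_in E H ` H)}" using assms by simp
  from Min_in[OF this ne] show ?thesis unfolding min_deg_vertex_def by simp
qed

function degen_order :: "('a::linorder \<Rightarrow> 'a \<Rightarrow> bool) \<Rightarrow> 'a set \<Rightarrow> 'a list" where
  "degen_order E H =
     (if finite H \<and> H \<noteq> {} then
        min_deg_vertex E H # degen_order E (H - {min_deg_vertex E H})
      else [])"
  by auto
termination
  by (relation "measure (\<lambda>(E, H). card H)")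
     (auto intro: card_Diff1_less min_deg_vertex_in)

(* Rec(H, C, X), with a recursion-depth bound n (fuel).  Every nested call of Rec
   strictly shrinks H, so fuel card V + 1 never runs out on the top-level call;
   rec_loop implements the for-loop of step (3), processing the remaining vertices
   of the degeneracy ordering with current S, \<hat>H, \<hat>X. *)
function rec_agg :: "nat \<Rightarrow> 'a set \<Rightarrow> ('a::linorder \<Rightarrow> 'a \<Rightarrow> bool) \<Rightarrow> real
      \<Rightarrow> 'a set \<Rightarrow> 'a set \<Rightarrow> 'a set \<Rightarrow> 'a set set"
and rec_loop :: "nat \<Rightarrow> 'a set \<Rightarrow> ('a::linorder \<Rightarrow> 'a \<Rightarrow> bool) \<Rightarrow> real
      \<Rightarrow> 'a set \<Rightarrow> 'a list \<Rightarrow> 'a set \<Rightarrow> 'a set \<Rightarrow> 'a set set \<Rightarrow> 'a set set" where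
  "rec_agg 0 V E \<rho> H C X = {}"
| "rec_agg (Suc n) V E \<rho> H C X =
     (if \<exists>x \<in> X. H \<subseteq> nbhd V E x then {}
      else if density E (C \<union> H) \<ge> \<rho> then {C \<union> H}
      else rec_loop n V E \<rho> C (degen_order E H) H X {})"
| "rec_loop n V E \<rho> C [] Hh Xh S = S"
| "rec_loop n V E \<rho> C (v # vs) Hh Xh S =
     (let S' = S \<union> rec_agg n V E \<rho> (nbhd V E v \<inter> Hh) (insert v C) (Xh \<inter> nbhd V E v);
          Hh' = Hh - {v};
          Xh' = insert v Xh
      in if \<exists>x \<in> Xh'. Hh' \<subseteq> nbhd V E x then S'
         else if density E (C \<union> Hh') \<ge> \<rho> then S' \<union> {C \<union> Hh'}
         else rec_loop n V E \<rho> C vs Hh' Xh' S')"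
  by pat_completeness auto
termination
  by (relation "measures [\<lambda>x. case x of Inl (n, _) \<Rightarrow> n | Inr (n, _) \<Rightarrow> n,
                          \<lambda>x. case x of Inl _ \<Rightarrow> 0 | Inr (n, V, E, r, C, vs, _) \<Rightarrow> length vs]") auto

definition clique_agg :: "'a set \<Rightarrow> ('a::linorder \<Rightarrow> 'a \<Rightarrow> bool) \<Rightarrow> real \<Rightarrow> 'a set set" where
  "clique_agg V E \<rho> = rec_agg (card V + 1) V E \<rho> V {} {}"

definition is_clique :: "'a set \<Rightarrow> ('a \<Rightarrow> 'a \<Rightarrow> bool) \<Rightarrow> 'a set \<Rightarrow> bool" where
  "is_clique V E K \<longleftrightarrow> K \<noteq> {} \<and> K \<subseteq> V \<and> (\<forall>u \<in> K. \<forall>v \<in> K. u \<noteq> v \<longrightarrow> E u v)"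

definition dense_aggregator ::
  "'a set \<Rightarrow> ('a \<Rightarrow> 'a \<Rightarrow> bool) \<Rightarrow> real \<Rightarrow> 'a set set \<Rightarrow> bool" where
  "dense_aggregator V E \<rho> \<S> \<longleftrightarrow>
     (\<forall>S \<in> \<S>. S \<noteq> {} \<and> S \<subseteq> V) \<and>
     (\<forall>K. is_clique V E K \<longrightarrow> (\<exists>S \<in> \<S>. K \<subseteq> S)) \<and>
     (\<forall>S \<in> \<S>. density E S \<ge> \<rho>)"

definition inclusion_maximal :: "'a set set \<Rightarrow> bool" where
  "inclusion_maximal \<S> \<longleftrightarrow> (\<forall>S \<in> \<S>. \<forall>T \<in> \<S>. S \<noteq> T \<longrightarrow> \<not> S \<subseteq> T)"

end

theory Submission
  imports Defs
begin

declare degen_order.simps[simp del]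

definition inv :: "'a set \<Rightarrow> ('a \<Rightarrow> 'a \<Rightarrow> bool) \<Rightarrow> 'a set \<Rightarrow> 'a set \<Rightarrow> 'a set \<Rightarrow> bool" where
  "inv V E C H X \<longleftrightarrow> simple_graph V E \<and> C \<subseteq> V \<and> H \<subseteq> V \<and> X \<subseteq> V \<and> H \<inter> X = {}
     \<and> (\<forall>y\<in>H \<union> X. \<forall>c\<in>C. E y c)"

definition goodS :: "'a set \<Rightarrow> ('a \<Rightarrow> 'a \<Rightarrow> bool) \<Rightarrow> real \<Rightarrow> 'a set \<Rightarrow> 'a set \<Rightarrow> 'a set \<Rightarrow> 'a set \<Rightarrow> bool" where
  "goodS V E \<rho> C H X S \<longleftrightarrow> C \<subseteq> S \<and> S \<subseteq> C \<union> H \<and> \<rho> \<le> density E S \<and> S \<noteq> {}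
     \<and> (\<forall>x\<in>X. \<not> (S - C \<subseteq> nbhd V E x))"

definition hist :: "'a set \<Rightarrow> ('a \<Rightarrow> 'a \<Rightarrow> bool) \<Rightarrow> 'a set \<Rightarrow> 'a set \<Rightarrow> 'a set set \<Rightarrow> bool" where
  "hist V E C X S \<longleftrightarrow> (\<forall>T\<in>S. \<exists>u\<in>X. u \<in> T \<and> T \<subseteq> insert u (C \<union> nbhd V E u))"

lemma goodSD:
  assumes "goodS V E \<rho> C H X S"
  shows "C \<subseteq> S" "S \<subseteq> C \<union> H" "\<rho> \<le> density E S" "S \<noteq> {}" "\<And>x. x \<in> X \<Longrightarrow> \<not> (S - C \<subseteq> nbhd V E x)"
  using assms unfolding goodS_def by blast+

lemma nbhd_iff: "u \<in> nbhd V E v \<longleftrightarrow> u \<in> V \<and> E v u"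
  unfolding nbhd_def by blast

lemma cross_lemma:
  assumes sym: "\<And>a b. E a b \<Longrightarrow> E b a"
    and u: "u \<in> T" "T \<subseteq> insert u (C \<union> nbhd V E u)" and uU: "u \<notin> U"
    and vU: "v \<in> U" "v \<notin> C" "u \<noteq> v" and uV: "u \<in> V"
    and g5: "u \<in> nbhd V E v \<Longrightarrow> \<not> (U - insert v C \<subseteq> nbhd V E u)"
  shows "\<not> U \<subseteq> T"
proof
  assume UT: "U \<subseteq> T"
  show False
  proof (cases "E v u")
    case True
    then have "u \<in> nbhd V E v" using uV by (simp add: nbhd_iff)
    moreover have "U - insert v C \<subseteq> nbhd V E u" using UT u uU by blast
    ultimately show False using g5 by blast
  next
    case False
    then have "v \<notin> nbhd V E u" using sym by (auto simp: nbhd_iff)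
    moreover have "v \<in> insert u (C \<union> nbhd V E u)" using UT u vU by blast
    ultimately show False using vU by blast
  qed
qed

lemma degen_order_props:
  "finite H \<Longrightarrow> set (degen_order E H) = H \<and> distinct (degen_order E H)"
proof (induction E H rule: degen_order.induct)
  case (1 E H)
  show ?case
  proof (cases "H = {}")
    case True then show ?thesis by (simp add: degen_order.simps)
  next
    case False
    have m: "min_deg_vertex E H \<in> H" using min_deg_vertex_in[OF "1.prems" False] .
    have ih: "set (degen_order E (H - {min_deg_vertex E H})) = H - {min_deg_vertex E H}
        \<and> distinct (degen_order E (H - {min_deg_vertex E H}))"
      using 1 False by auto
    have "degen_order E H = min_deg_vertex E H # degen_order E (H - {min_deg_vertex E H})"
      using "1.prems" False by (simp add: degen_order.simps)
    then show ?thesis using ih m by auto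
  qed
qed

lemma inv_disj: "inv V E C H X \<Longrightarrow> C \<inter> H = {} \<and> C \<inter> X = {}"
  unfolding inv_def simple_graph_def by blast

lemma inv_rec: "inv V E C Hh Xh \<Longrightarrow> v \<in> Hh \<Longrightarrow>
   inv V E (insert v C) (nbhd V E v \<inter> Hh) (Xh \<inter> nbhd V E v)"
  unfolding inv_def simple_graph_def nbhd_def by blast

lemma inv_step: "inv V E C Hh Xh \<Longrightarrow> v \<in> Hh \<Longrightarrow> inv V E C (Hh - {v}) (insert v Xh)"
  unfolding inv_def by blast

lemma incl_max_union:
  "inclusion_maximal A \<Longrightarrow> inclusion_maximal B \<Longrightarrow> (\<forall>a\<in>A. \<forall>b\<in>B. \<not> a \<subseteq> b \<and> \<not> b \<subseteq> a)
   \<Longrightarrow> inclusion_maximal (A \<union> B)"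
  unfolding inclusion_maximal_def by blast


definition clq :: "('a \<Rightarrow> 'a \<Rightarrow> bool) \<Rightarrow> 'a set \<Rightarrow> bool" where
  "clq E K \<longleftrightarrow> (\<forall>u\<in>K. \<forall>w\<in>K. u \<noteq> w \<longrightarrow> E u w)"

definition maxrel :: "'a set \<Rightarrow> ('a \<Rightarrow> 'a \<Rightarrow> bool) \<Rightarrow> 'a set \<Rightarrow> 'a set \<Rightarrow> 'a set \<Rightarrow> bool" where
  "maxrel V E C A K \<longleftrightarrow> (\<forall>y\<in>A - K. \<not> (K - C \<subseteq> nbhd V E y))"

lemma clique_density:
  assumes "finite K" "clq E K" "\<And>u. \<not> E u u"
  shows "density E K = 1"
proof (cases "card K \<ge> 2")
  case True
  have "edges_in E K = {e. e \<subseteq> K \<and> card e = 2}"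
  proof (intro equalityI subsetI)
    fix e assume "e \<in> edges_in E K"
    then obtain u w where "e = {u, w}" "u \<in> K" "w \<in> K" "E u w" unfolding edges_in_def by blast
    moreover then have "u \<noteq> w" using assms(3) by blast
    ultimately show "e \<in> {e. e \<subseteq> K \<and> card e = 2}" by auto
  next
    fix e assume "e \<in> {e. e \<subseteq> K \<and> card e = 2}"
    then have "e \<subseteq> K" "card e = 2" by auto
    then obtain u w where "e = {u, w}" "u \<noteq> w" by (meson card_2_iff)
    then show "e \<in> edges_in E K" using \<open>e \<subseteq> K\<close> assms(2) unfolding edges_in_def clq_def by blast
  qed
  then have "card (edges_in E K) = card K choose 2" using n_subsets[OF assms(1)] by simp
  moreover have "card K choose 2 > 0" using True by simp
  ultimately show ?thesis unfolding density_def using True by simp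
next
  case False then show ?thesis unfolding density_def by simp
qed

lemma loop_mono: "S \<subseteq> rec_loop n V E \<rho> C vs Hh Xh S"
proof (induction vs arbitrary: Hh Xh S)
  case Nil then show ?case by simp
next
  case (Cons v vs)
  show ?case using Cons[of "S \<union> rec_agg n V E \<rho> (nbhd V E v \<inter> Hh) (insert v C) (Xh \<inter> nbhd V E v)"]
    by (auto simp: Let_def)
qed

lemma sound:
  "inv V E C H X \<and> C \<union> H \<noteq> {} \<longrightarrow>
     (\<forall>S\<in>rec_agg n V E \<rho> H C X. goodS V E \<rho> C H X S) \<and> inclusion_maximal (rec_agg n V E \<rho> H C X)"
  "\<forall>H0 X0. inv V E C Hh Xh \<and> distinct vs \<and> set vs \<subseteq> Hh \<and> Hh \<subseteq> H0 \<and> X0 \<subseteq> Xh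
     \<and> (\<forall>T\<in>S. goodS V E \<rho> C H0 X0 T) \<and> hist V E C Xh S \<and> inclusion_maximal S \<longrightarrow>
     (\<forall>T\<in>rec_loop n V E \<rho> C vs Hh Xh S. goodS V E \<rho> C H0 X0 T)
     \<and> inclusion_maximal (rec_loop n V E \<rho> C vs Hh Xh S)"
proof (induction n V E \<rho> H C X and n V E \<rho> C vs Hh Xh S rule: rec_agg_rec_loop.induct)
  case (1 V E \<rho> H C X)
  then show ?case by (simp add: inclusion_maximal_def)
next
  case (2 n V E \<rho> H C X)
  show ?case
  proof (intro impI)
    assume a: "inv V E C H X \<and> C \<union> H \<noteq> {}"
    have disj: "C \<inter> H = {}" using inv_disj a by blast
    have fin: "finite H" using a unfolding inv_def simple_graph_def using finite_subset by blast
    show "(\<forall>S\<in>rec_agg (Suc n) V E \<rho> H C X. goodS V E \<rho> C H X S) \<and> inclusion_maximal (rec_agg (Suc n) V E \<rho> H C X)"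
    proof (cases "\<exists>x \<in> X. H \<subseteq> nbhd V E x")
      case True then show ?thesis by (simp add: inclusion_maximal_def)
    next
      case np: False
      show ?thesis
      proof (cases "\<rho> \<le> density E (C \<union> H)")
        case True
        have "(C \<union> H) - C = H" using disj by blast
        then have "goodS V E \<rho> C H X (C \<union> H)" using True np a unfolding goodS_def by (intro conjI) blast+
        then show ?thesis using np True by (simp add: inclusion_maximal_def)
      next
        case False
        have d: "set (degen_order E H) = H" "distinct (degen_order E H)" using degen_order_props[OF fin] by auto
        have "(\<forall>T\<in>rec_loop n V E \<rho> C (degen_order E H) H X {}. goodS V E \<rho> C H X T)
          \<and> inclusion_maximal (rec_loop n V E \<rho> C (degen_order E H) H X {})"
          using "2.IH"[OF np False, rule_format, of H X] a d
          by (simp add: hist_def inclusion_maximal_def)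
        then show ?thesis using np False by simp
      qed
    qed
  qed
next
  case (3 n V E \<rho> C Hh Xh S)
  then show ?case by simp
next
  case (4 n V E \<rho> C v vs Hh Xh S)
  show ?case
  proof (intro allI impI)
    fix H0 X0
    assume a: "inv V E C Hh Xh \<and> distinct (v # vs) \<and> set (v # vs) \<subseteq> Hh \<and> Hh \<subseteq> H0 \<and> X0 \<subseteq> Xh
     \<and> (\<forall>T\<in>S. goodS V E \<rho> C H0 X0 T) \<and> hist V E C Xh S \<and> inclusion_maximal S"
    have inv: "inv V E C Hh Xh" and vH: "v \<in> Hh" and dvs: "distinct vs" "v \<notin> set vs"
      and svs: "set vs \<subseteq> Hh" and HH0: "Hh \<subseteq> H0" and XX0: "X0 \<subseteq> Xh"
      and gS: "\<forall>T\<in>S. goodS V E \<rho> C H0 X0 T" and hS: "hist V E C Xh S" and mS: "inclusion_maximal S"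
      using a by auto
    have sg: "simple_graph V E" using inv unfolding inv_def by blast
    have sym: "\<And>a b. E a b \<Longrightarrow> E b a" and irr: "\<And>a. \<not> E a a"
      using sg unfolding simple_graph_def by blast+
    have disj: "C \<inter> Hh = {}" "C \<inter> Xh = {}" using inv_disj[OF inv] by blast+
    have HX: "Hh \<inter> Xh = {}" using inv unfolding inv_def by blast
    have XV: "Xh \<subseteq> V" using inv unfolding inv_def by blast
    define R where "R = rec_agg n V E \<rho> (nbhd V E v \<inter> Hh) (insert v C) (Xh \<inter> nbhd V E v)"
    define S' where "S' = S \<union> R"
    define Hh' where "Hh' = Hh - {v}"
    define Xh' where "Xh' = insert v Xh"
    have IR: "(\<forall>U\<in>R. goodS V E \<rho> (insert v C) (nbhd V E v \<inter> Hh) (Xh \<inter> nbhd V E v) U) \<and> inclusion_maximal R"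
      using "4.IH"(1) inv_rec[OF inv vH] unfolding R_def by blast
    have gR: "\<forall>U\<in>R. goodS V E \<rho> C H0 X0 U"
    proof
      fix U assume U: "U \<in> R"
      then have g: "goodS V E \<rho> (insert v C) (nbhd V E v \<inter> Hh) (Xh \<inter> nbhd V E v) U" using IR by blast
      have vU: "v \<in> U" "v \<notin> C" using goodSD(1)[OF g] disj vH by auto
      have "\<forall>x\<in>X0. \<not> (U - C \<subseteq> nbhd V E x)"
      proof (intro ballI notI)
        fix x assume x: "x \<in> X0" and sub: "U - C \<subseteq> nbhd V E x"
        show False
        proof (cases "x \<in> nbhd V E v")
          case True
          then have "x \<in> Xh \<inter> nbhd V E v" using x XX0 by blast
          moreover have "U - insert v C \<subseteq> nbhd V E x" using sub by blast
          ultimately show False using goodSD(5)[OF g] by blast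
        next
          case False
          have "v \<in> nbhd V E x" using sub vU by blast
          then have "E x v" unfolding nbhd_def by blast
          then have "x \<in> nbhd V E v" using sym x XX0 XV unfolding nbhd_def by blast
          then show False using False by blast
        qed
      qed
      moreover have "C \<subseteq> U" "\<rho> \<le> density E U" "U \<noteq> {}" using goodSD(1,3,4)[OF g] by blast+
      moreover have "U \<subseteq> C \<union> H0"
      proof -
        have "U \<subseteq> insert v C \<union> (nbhd V E v \<inter> Hh)" using goodSD(2)[OF g] .
        then show ?thesis using vH HH0 by blast
      qed
      ultimately show "goodS V E \<rho> C H0 X0 U" unfolding goodS_def by blast
    qed
    have gS': "\<forall>T\<in>S'. goodS V E \<rho> C H0 X0 T" using gS gR unfolding S'_def by blast
    have hS': "hist V E C Xh' S'"
      unfolding hist_def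
    proof
      fix T assume "T \<in> S'"
      then consider "T \<in> S" | "T \<in> R" unfolding S'_def by blast
      then show "\<exists>u\<in>Xh'. u \<in> T \<and> T \<subseteq> insert u (C \<union> nbhd V E u)"
      proof cases
        case 1
        then obtain u where "u \<in> Xh" "u \<in> T \<and> T \<subseteq> insert u (C \<union> nbhd V E u)"
          using hS unfolding hist_def by blast
        moreover have "u \<in> Xh'" using \<open>u \<in> Xh\<close> unfolding Xh'_def by blast
        ultimately show ?thesis by blast
      next
        case 2
        then have g: "goodS V E \<rho> (insert v C) (nbhd V E v \<inter> Hh) (Xh \<inter> nbhd V E v) T" using IR by blast
        then have "v \<in> T" "T \<subseteq> insert v C \<union> (nbhd V E v \<inter> Hh)" using goodSD(1,2)[OF g] by blast+
        then have "v \<in> T \<and> T \<subseteq> insert v (C \<union> nbhd V E v)" by blast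
        moreover have "v \<in> Xh'" unfolding Xh'_def by blast
        ultimately show ?thesis by blast
      qed
    qed
    have cross: "\<forall>T\<in>S. \<forall>U\<in>R. \<not> T \<subseteq> U \<and> \<not> U \<subseteq> T"
    proof (intro ballI conjI)
      fix T U assume T: "T \<in> S" and U: "U \<in> R"
      obtain u where u: "u \<in> Xh" "u \<in> T" "T \<subseteq> insert u (C \<union> nbhd V E u)" using hS T unfolding hist_def by blast
      have g: "goodS V E \<rho> (insert v C) (nbhd V E v \<inter> Hh) (Xh \<inter> nbhd V E v) U" using IR U by blast
      have Usub: "U \<subseteq> insert v C \<union> (nbhd V E v \<inter> Hh)" using goodSD(2)[OF g] .
      have "u \<notin> C" "u \<noteq> v" "u \<notin> Hh" using u(1) disj HX vH by blast+
      then have uU: "u \<notin> U" using Usub by blast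
      show "\<not> T \<subseteq> U" using uU u by blast
      have "v \<in> U" using goodSD(1)[OF g] by blast
      moreover have "v \<notin> C" using disj vH by blast
      moreover have "u \<in> V" using u(1) XV by blast
      moreover have "u \<in> nbhd V E v \<Longrightarrow> \<not> (U - insert v C \<subseteq> nbhd V E u)"
        using goodSD(5)[OF g, of u] u(1) by blast
      ultimately show "\<not> U \<subseteq> T" using cross_lemma[of E u T C V U v] sym u uU \<open>u \<noteq> v\<close> by blast
    qed
    have mS': "inclusion_maximal S'" unfolding S'_def using incl_max_union[OF mS conjunct2[OF IR]] cross by blast
    have eq: "rec_loop n V E \<rho> C (v # vs) Hh Xh S =
      (if \<exists>x \<in> Xh'. Hh' \<subseteq> nbhd V E x then S'
         else if density E (C \<union> Hh') \<ge> \<rho> then S' \<union> {C \<union> Hh'}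
         else rec_loop n V E \<rho> C vs Hh' Xh' S')"
      unfolding S'_def R_def Hh'_def Xh'_def by (simp add: Let_def)
    show "(\<forall>T\<in>rec_loop n V E \<rho> C (v # vs) Hh Xh S. goodS V E \<rho> C H0 X0 T)
       \<and> inclusion_maximal (rec_loop n V E \<rho> C (v # vs) Hh Xh S)"
    proof (cases "\<exists>x \<in> Xh'. Hh' \<subseteq> nbhd V E x")
      case True
      then have "rec_loop n V E \<rho> C (v # vs) Hh Xh S = S'" by (simp only: eq if_True)
      then show ?thesis using gS' mS' by simp
    next
      case np: False
      show ?thesis
      proof (cases "density E (C \<union> Hh') \<ge> \<rho>")
        case True
        have Fm: "C \<union> Hh' - C = Hh'" using disj unfolding Hh'_def by blast
        have ne: "Hh' \<noteq> {}"
        proof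
          assume "Hh' = {}"
          then have "Hh' \<subseteq> nbhd V E v" by simp
          moreover have "v \<in> Xh'" unfolding Xh'_def by simp
          ultimately show False using np by blast
        qed
        have sub: "C \<union> Hh' \<subseteq> C \<union> H0" using HH0 unfolding Hh'_def by blast
        have nx: "\<forall>x\<in>X0. \<not> (C \<union> Hh' - C \<subseteq> nbhd V E x)"
        proof (intro ballI)
          fix x assume "x \<in> X0"
          then have "x \<in> Xh'" using XX0 unfolding Xh'_def by blast
          then have "\<not> Hh' \<subseteq> nbhd V E x" using np by blast
          then show "\<not> (C \<union> Hh' - C \<subseteq> nbhd V E x)" using Fm by simp
        qed
        have gF: "goodS V E \<rho> C H0 X0 (C \<union> Hh')"
          unfolding goodS_def
        proof (intro conjI)
          show "C \<subseteq> C \<union> Hh'" by (rule Un_upper1)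
        qed (use sub True ne nx in auto)
        have cF: "\<forall>T\<in>S'. \<not> T \<subseteq> C \<union> Hh' \<and> \<not> C \<union> Hh' \<subseteq> T"
        proof (intro ballI conjI)
          fix T assume T: "T \<in> S'"
          obtain u where u: "u \<in> Xh'" "u \<in> T" "T \<subseteq> insert u (C \<union> nbhd V E u)" using hS' T unfolding hist_def by blast
          have uF: "u \<notin> C \<union> Hh'" using u(1) disj HX vH unfolding Xh'_def Hh'_def by blast
          show "\<not> T \<subseteq> C \<union> Hh'" using uF u by blast
          show "\<not> C \<union> Hh' \<subseteq> T"
          proof
            assume "C \<union> Hh' \<subseteq> T"
            then have "Hh' \<subseteq> nbhd V E u" using u uF disj unfolding Hh'_def by blast
            then show False using np u(1) by blast
          qed
        qed
        have "inclusion_maximal (S' \<union> {C \<union> Hh'})"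
          using incl_max_union[OF mS', of "{C \<union> Hh'}"] cF by (simp add: inclusion_maximal_def)
        moreover have "rec_loop n V E \<rho> C (v # vs) Hh Xh S = S' \<union> {C \<union> Hh'}"
          using np True by (simp only: eq if_False if_True)
        ultimately show ?thesis using gS' gF by simp
      next
        case False
        have f1: "inv V E C Hh' Xh'" using inv_step[OF inv vH] unfolding Hh'_def Xh'_def .
        have f2: "set vs \<subseteq> Hh'" using svs dvs unfolding Hh'_def by blast
        have f3: "Hh' \<subseteq> H0" "X0 \<subseteq> Xh'" using HH0 XX0 unfolding Hh'_def Xh'_def by blast+
        have "(\<forall>T\<in>rec_loop n V E \<rho> C vs Hh' Xh' S'. goodS V E \<rho> C H0 X0 T)
          \<and> inclusion_maximal (rec_loop n V E \<rho> C vs Hh' Xh' S')"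
        proof -
          have IH2: "\<forall>H0 X0. inv V E C Hh' Xh' \<and> distinct vs \<and> set vs \<subseteq> Hh' \<and> Hh' \<subseteq> H0 \<and> X0 \<subseteq> Xh'
             \<and> (\<forall>T\<in>S'. goodS V E \<rho> C H0 X0 T) \<and> hist V E C Xh' S' \<and> inclusion_maximal S' \<longrightarrow>
             (\<forall>T\<in>rec_loop n V E \<rho> C vs Hh' Xh' S'. goodS V E \<rho> C H0 X0 T)
             \<and> inclusion_maximal (rec_loop n V E \<rho> C vs Hh' Xh' S')"
            using "4.IH"(2)[of S' Hh' Xh'] S'_def R_def Hh'_def Xh'_def np False by blast
          show ?thesis using IH2 f1 f2 f3 dvs gS' hS' mS' by blast
        qed
        moreover have "rec_loop n V E \<rho> C (v # vs) Hh Xh S = rec_loop n V E \<rho> C vs Hh' Xh' S'"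
          using np False by (simp only: eq if_False)
        ultimately show ?thesis by simp
      qed
    qed
  qed
qed

lemma cover:
  "\<forall>K. inv V E C H X \<and> card H < n \<and> \<rho> \<le> 1 \<and> clq E K \<and> C \<subseteq> K \<and> K \<subseteq> C \<union> H
     \<and> maxrel V E C (H \<union> X) K \<longrightarrow> (\<exists>T\<in>rec_agg n V E \<rho> H C X. K \<subseteq> T)"
  "\<forall>K. inv V E C Hh Xh \<and> distinct vs \<and> set vs = Hh \<and> card Hh \<le> n \<and> \<rho> \<le> 1 \<and> clq E K \<and> C \<subseteq> K
     \<and> K - C \<subseteq> Hh \<and> K - C \<noteq> {} \<and> maxrel V E C (Hh \<union> Xh) K
     \<longrightarrow> (\<exists>T\<in>rec_loop n V E \<rho> C vs Hh Xh S. K \<subseteq> T)"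
proof (induction n V E \<rho> H C X and n V E \<rho> C vs Hh Xh S rule: rec_agg_rec_loop.induct)
  case (1 V E \<rho> H C X)
  then show ?case by simp
next
  case (2 n V E \<rho> H C X)
  show ?case
  proof (intro allI impI)
    fix K
    assume a: "inv V E C H X \<and> card H < Suc n \<and> \<rho> \<le> 1 \<and> clq E K \<and> C \<subseteq> K \<and> K \<subseteq> C \<union> H
       \<and> maxrel V E C (H \<union> X) K"
    have inv: "inv V E C H X" and cH: "card H \<le> n" and r1: "\<rho> \<le> 1" and cl: "clq E K"
      and CK: "C \<subseteq> K" and KCH: "K \<subseteq> C \<union> H" and mx: "maxrel V E C (H \<union> X) K" using a by auto
    have sg: "simple_graph V E" using inv unfolding inv_def by blast
    have irr: "\<And>a. \<not> E a a" using sg unfolding simple_graph_def by blast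
    have fV: "finite V" using sg unfolding simple_graph_def by blast
    have disj: "C \<inter> H = {}" "C \<inter> X = {}" using inv_disj[OF inv] by blast+
    have HX: "H \<inter> X = {}" using inv unfolding inv_def by blast
    have fin: "finite H" "finite C" using inv fV finite_subset unfolding inv_def by blast+
    show "\<exists>T\<in>rec_agg (Suc n) V E \<rho> H C X. K \<subseteq> T"
    proof (cases "\<exists>x \<in> X. H \<subseteq> nbhd V E x")
      case True
      then obtain x where x: "x \<in> X" "H \<subseteq> nbhd V E x" by blast
      have "x \<in> (H \<union> X) - K" using x(1) disj HX KCH by blast
      moreover have "K - C \<subseteq> nbhd V E x" using x(2) KCH by blast
      ultimately have False using mx unfolding maxrel_def by blast
      then show ?thesis ..
    next
      case np: False
      show ?thesis
      proof (cases "\<rho> \<le> density E (C \<union> H)")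
        case True
        then show ?thesis using np KCH by simp
      next
        case False
        have ne: "K - C \<noteq> {}"
        proof
          assume e: "K - C = {}"
          have "H \<subseteq> K"
          proof
            fix y assume y: "y \<in> H"
            show "y \<in> K"
            proof (rule ccontr)
              assume "y \<notin> K"
              then have "y \<in> (H \<union> X) - K" using y by blast
              then show False using mx e unfolding maxrel_def by blast
            qed
          qed
          then have "H = {}" using e disj by blast
          then have "C = K" using e CK by blast
          moreover have "density E C = 1" using clique_density[of C E] fin(2) irr cl \<open>C = K\<close> by blast
          ultimately have "density E (C \<union> H) = 1" using \<open>H = {}\<close> by simp
          then show False using False r1 by simp
        qed
        have d: "set (degen_order E H) = H" "distinct (degen_order E H)" using degen_order_props[OF fin(1)] by auto
        have "\<exists>T\<in>rec_loop n V E \<rho> C (degen_order E H) H X {}. K \<subseteq> T"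
          using "2.IH"[OF np False, rule_format, of K] inv d cH r1 cl CK KCH ne mx by blast
        then show ?thesis using np False by simp
      qed
    qed
  qed
next
  case (3 n V E \<rho> C Hh Xh S)
  then show ?case by auto
next
  case (4 n V E \<rho> C v vs Hh Xh S)
  show ?case
  proof (intro allI impI)
    fix K
    assume a: "inv V E C Hh Xh \<and> distinct (v # vs) \<and> set (v # vs) = Hh \<and> card Hh \<le> n \<and> \<rho> \<le> 1 \<and> clq E K \<and> C \<subseteq> K
     \<and> K - C \<subseteq> Hh \<and> K - C \<noteq> {} \<and> maxrel V E C (Hh \<union> Xh) K"
    have inv: "inv V E C Hh Xh" and dvs: "distinct vs" "v \<notin> set vs" and sH: "insert v (set vs) = Hh"
      and cH: "card Hh \<le> n" and r1: "\<rho> \<le> 1" and cl: "clq E K" and CK: "C \<subseteq> K" and KH: "K - C \<subseteq> Hh"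
      and ne: "K - C \<noteq> {}" and mx: "maxrel V E C (Hh \<union> Xh) K" using a by auto
    have vH: "v \<in> Hh" using sH by blast
    have sg: "simple_graph V E" using inv unfolding inv_def by blast
    have sym: "\<And>a b. E a b \<Longrightarrow> E b a" and irr: "\<And>a. \<not> E a a"
      using sg unfolding simple_graph_def by blast+
    have disj: "C \<inter> Hh = {}" "C \<inter> Xh = {}" using inv_disj[OF inv] by blast+
    have HX: "Hh \<inter> Xh = {}" using inv unfolding inv_def by blast
    have XV: "Xh \<subseteq> V" and HV: "Hh \<subseteq> V" using inv unfolding inv_def by blast+
    have finH: "finite Hh" using sH by auto
    define R where "R = rec_agg n V E \<rho> (nbhd V E v \<inter> Hh) (insert v C) (Xh \<inter> nbhd V E v)"
    define S' where "S' = S \<union> R"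
    define Hh' where "Hh' = Hh - {v}"
    define Xh' where "Xh' = insert v Xh"
    have eq: "rec_loop n V E \<rho> C (v # vs) Hh Xh S =
      (if \<exists>x \<in> Xh'. Hh' \<subseteq> nbhd V E x then S'
         else if density E (C \<union> Hh') \<ge> \<rho> then S' \<union> {C \<union> Hh'}
         else rec_loop n V E \<rho> C vs Hh' Xh' S')"
      unfolding S'_def R_def Hh'_def Xh'_def by (simp add: Let_def)
    have S'sub: "S' \<subseteq> rec_loop n V E \<rho> C (v # vs) Hh Xh S"
      unfolding eq using loop_mono[of S' n V E \<rho> C vs Hh' Xh'] by auto
    show "\<exists>T\<in>rec_loop n V E \<rho> C (v # vs) Hh Xh S. K \<subseteq> T"
    proof (cases "v \<in> K")
      case True
      have c1: "card (nbhd V E v \<inter> Hh) < n"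
      proof -
        have "nbhd V E v \<inter> Hh \<subseteq> Hh - {v}" using irr by (auto simp: nbhd_iff)
        then have "card (nbhd V E v \<inter> Hh) \<le> card (Hh - {v})" using finH by (intro card_mono) auto
        also have "\<dots> < card Hh" using finH vH by (rule card_Diff1_less)
        finally show ?thesis using cH by simp
      qed
      have k1: "insert v C \<subseteq> K" using True CK by blast
      have k2: "K \<subseteq> insert v C \<union> (nbhd V E v \<inter> Hh)"
      proof
        fix k assume k: "k \<in> K"
        show "k \<in> insert v C \<union> (nbhd V E v \<inter> Hh)"
        proof (cases "k = v \<or> k \<in> C")
          case True then show ?thesis by blast
        next
          case False
          have kH: "k \<in> Hh" using k KH False by blast
          have "E v k" using cl True k False unfolding clq_def by metis
          then have "k \<in> nbhd V E v" using kH HV by (auto simp: nbhd_iff)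
          then show ?thesis using kH by blast
        qed
      qed
      have k3: "maxrel V E (insert v C) ((nbhd V E v \<inter> Hh) \<union> (Xh \<inter> nbhd V E v)) K"
        unfolding maxrel_def
      proof (intro ballI notI)
        fix y assume y: "y \<in> (nbhd V E v \<inter> Hh) \<union> (Xh \<inter> nbhd V E v) - K"
          and sub: "K - insert v C \<subseteq> nbhd V E y"
        have "y \<in> nbhd V E v" using y by blast
        then have "E v y" by (simp add: nbhd_iff)
        then have "E y v" by (rule sym)
        moreover have "v \<in> V" using HV vH by blast
        ultimately have "v \<in> nbhd V E y" by (simp add: nbhd_iff)
        then have "K - C \<subseteq> nbhd V E y" using sub by blast
        moreover have "y \<in> (Hh \<union> Xh) - K" using y by blast
        ultimately show False using mx unfolding maxrel_def by blast
      qed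
      have "\<exists>T\<in>R. K \<subseteq> T"
        unfolding R_def
        by (rule "4.IH"(1)[rule_format, of K]) (intro conjI inv_rec[OF inv vH] c1 r1 cl k1 k2 k3)
      then show ?thesis using S'sub unfolding S'_def by blast
    next
      case vK: False
      have KH': "K - C \<subseteq> Hh'" using KH vK unfolding Hh'_def by blast
      show ?thesis
      proof (cases "\<exists>x \<in> Xh'. Hh' \<subseteq> nbhd V E x")
        case True
        then obtain x where x: "x \<in> Xh'" "Hh' \<subseteq> nbhd V E x" by blast
        have "x \<in> (Hh \<union> Xh) - K" using x(1) vK vH disj HX KH CK unfolding Xh'_def by blast
        moreover have "K - C \<subseteq> nbhd V E x" using x(2) KH' by blast
        ultimately have False using mx unfolding maxrel_def by blast
        then show ?thesis ..
      next
        case np: False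
        show ?thesis
        proof (cases "density E (C \<union> Hh') \<ge> \<rho>")
          case True
          then have "rec_loop n V E \<rho> C (v # vs) Hh Xh S = S' \<union> {C \<union> Hh'}"
            using np by (simp only: eq if_False if_True)
          moreover have "K \<subseteq> C \<union> Hh'" using KH' by blast
          ultimately show ?thesis by blast
        next
          case False
          have f1: "inv V E C Hh' Xh'" using inv_step[OF inv vH] unfolding Hh'_def Xh'_def .
          have f2: "set vs = Hh'" using sH dvs unfolding Hh'_def by blast
          have f3: "card Hh' \<le> n" using cH finH unfolding Hh'_def by (meson card_Diff1_le le_trans)
          have "Hh' \<union> Xh' = Hh \<union> Xh" using vH unfolding Hh'_def Xh'_def by blast
          then have f4: "maxrel V E C (Hh' \<union> Xh') K" using mx by simp
          have IH2: "\<forall>K. inv V E C Hh' Xh' \<and> distinct vs \<and> set vs = Hh' \<and> card Hh' \<le> n \<and> \<rho> \<le> 1 \<and> clq E K \<and> C \<subseteq> K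
             \<and> K - C \<subseteq> Hh' \<and> K - C \<noteq> {} \<and> maxrel V E C (Hh' \<union> Xh') K
             \<longrightarrow> (\<exists>T\<in>rec_loop n V E \<rho> C vs Hh' Xh' S'. K \<subseteq> T)"
            using "4.IH"(2)[of S' Hh' Xh'] S'_def R_def Hh'_def Xh'_def np False by blast
          have "\<exists>T\<in>rec_loop n V E \<rho> C vs Hh' Xh' S'. K \<subseteq> T"
            using IH2 f1 f2 f3 f4 dvs r1 cl CK KH' ne by blast
          moreover have "rec_loop n V E \<rho> C (v # vs) Hh Xh S = rec_loop n V E \<rho> C vs Hh' Xh' S'"
            using np False by (simp only: eq if_False)
          ultimately show ?thesis by simp
        qed
      qed
    qed
  qed
qed


theorem theorem3p2:
  fixes V :: "'a::linorder set" and E :: "'a \<Rightarrow> 'a \<Rightarrow> bool" and \<rho> :: real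
  assumes "simple_graph V E" and "V \<noteq> {}"
    and "0 < \<rho>" and "\<rho> \<le> 1"
  shows "dense_aggregator V E \<rho> (clique_agg V E \<rho>) \<and> inclusion_maximal (clique_agg V E \<rho>)"
proof -
  have sg: "simple_graph V E" by fact
  have sym: "\<And>a b. E a b \<Longrightarrow> E b a" and fV: "finite V"
    using sg unfolding simple_graph_def by blast+
  have inv0: "inv V E {} V {}" using sg unfolding inv_def by blast
  define Out where "Out = rec_agg (card V + 1) V E \<rho> V {} {}"
  have O: "clique_agg V E \<rho> = Out" unfolding clique_agg_def Out_def by simp
  have snd: "(\<forall>S\<in>Out. goodS V E \<rho> {} V {} S) \<and> inclusion_maximal Out"
  proof -
    have "inv V E {} V {} \<and> {} \<union> V \<noteq> {} \<longrightarrow>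
     (\<forall>S\<in>rec_agg (card V + 1) V E \<rho> V {} {}. goodS V E \<rho> {} V {} S) \<and> inclusion_maximal (rec_agg (card V + 1) V E \<rho> V {} {})"
      by (rule sound(1))
    moreover have "inv V E {} V {} \<and> {} \<union> V \<noteq> {}" using inv0 assms(2) by simp
    ultimately show ?thesis unfolding Out_def by (rule mp)
  qed
  have p1: "\<forall>S\<in>Out. S \<noteq> {} \<and> S \<subseteq> V" using snd unfolding goodS_def by simp
  have p3: "\<forall>S\<in>Out. \<rho> \<le> density E S" using snd unfolding goodS_def by simp
  have p2: "\<forall>K. is_clique V E K \<longrightarrow> (\<exists>S\<in>Out. K \<subseteq> S)"
  proof (intro allI impI)
    fix K assume K: "is_clique V E K"
    define A where "A = {K'. K \<subseteq> K' \<and> K' \<subseteq> V \<and> clq E K'}"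
    have "A \<subseteq> Pow V" unfolding A_def by blast
    then have "finite A" using fV by (meson finite_Pow_iff finite_subset)
    moreover have "K \<in> A" using K unfolding A_def is_clique_def clq_def by simp
    ultimately have "\<exists>M\<in>A. \<forall>b\<in>A. M \<le> b \<longrightarrow> M = b"
      by (intro finite_has_maximal) auto
    then obtain M where M: "M \<in> A" "\<forall>b\<in>A. M \<subseteq> b \<longrightarrow> M = b" by blast
    have MV: "M \<subseteq> V" "clq E M" "K \<subseteq> M" using M(1) unfolding A_def by simp_all
    have mx: "maxrel V E {} (V \<union> {}) M"
      unfolding maxrel_def
    proof (intro ballI notI)
      fix y assume y: "y \<in> V \<union> {} - M" and sub: "M - {} \<subseteq> nbhd V E y"
      have "clq E (insert y M)"
        unfolding clq_def
      proof (intro ballI impI)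
        fix u w assume u: "u \<in> insert y M" and w: "w \<in> insert y M" and uw: "u \<noteq> w"
        show "E u w"
        proof (cases "u = y")
          case True
          then have "w \<in> M" using w uw by blast
          then show ?thesis using sub True by (auto simp: nbhd_iff)
        next
          case False
          then have uM: "u \<in> M" using u by blast
          show ?thesis
          proof (cases "w = y")
            case True
            then have "E y u" using sub uM by (auto simp: nbhd_iff)
            then show ?thesis using True sym by blast
          next
            case False
            then show ?thesis using uM w uw MV(2) unfolding clq_def by blast
          qed
        qed
      qed
      moreover have "y \<in> V" using y by blast
      ultimately have "insert y M \<in> A" using MV unfolding A_def by auto
      then have "M = insert y M" using M(2) by (meson subset_insertI)
      then show False using y by blast
    qed
    have cv: "\<forall>K. inv V E {} V {} \<and> card V < card V + 1 \<and> \<rho> \<le> 1 \<and> clq E K \<and> {} \<subseteq> K \<and> K \<subseteq> {} \<union> V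
     \<and> maxrel V E {} (V \<union> {}) K \<longrightarrow> (\<exists>T\<in>rec_agg (card V + 1) V E \<rho> V {} {}. K \<subseteq> T)"
      by (rule cover(1))
    have "inv V E {} V {} \<and> card V < card V + 1 \<and> \<rho> \<le> 1 \<and> clq E M \<and> {} \<subseteq> M \<and> M \<subseteq> {} \<union> V
     \<and> maxrel V E {} (V \<union> {}) M" using inv0 assms(4) MV mx by simp
    then have "\<exists>T\<in>Out. M \<subseteq> T" using cv unfolding Out_def by blast
    then show "\<exists>S\<in>Out. K \<subseteq> S" using MV(3) by blast
  qed
  show ?thesis unfolding O dense_aggregator_def using p1 p2 p3 snd by (intro conjI) simp_all
qed

end
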